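(* Let $(\vdash,\overline{\cdot},\widehat{\cdot})$ be a setting satisfying Pre-Relevance, let $\mathcal{S},\mathcal{S}'\subseteq\mathcal{L}$ with $\mathcal{S}\mid\mathcal{S}'$, let $\mathcal{E}$ be a preferred extension of $\mathcal{AF}_{\vdash}(\mathcal{S}\cup\mathcal{S}')$ and $\mathcal{E}_1=\mathcal{E}\cap\mathit{Arg}_{\vdash}(\mathcal{S})$. Then $\mathcal{E}_1$ is a preferred extension of $\mathcal{AF}_{\vdash}(\mathcal{S})$.
   Context: $\mathcal{L}$ is the set of formulas of a language built from propositional atoms; $\mathsf{Atoms}(\mathcal{S})$ is the set of atoms occurring in $\mathcal{S}$, and $\mathcal{S}_1\mid\mathcal{S}_2$ means $\mathsf{Atoms}(\mathcal{S}_1)\cap\mathsf{Atoms}(\mathcal{S}_2)=\emptyset$. A setting is $(\vdash,\overline{\cdot},\widehat{\cdot})$ with ${\vdash}\subseteq\wp_{\sf fin}(\mathcal{L})\times\mathcal{L}$ arbitrary, $\overline{\cdot}:\mathcal{L}\to\wp(\mathcal{L})$, $\widehat{\cdot}$ assigning to each nonempty finite set a finite set of formulas, with $\widehat{\emptyset}=\emptyset$. $\mathit{Arg}_{\vdash}(\mathcal{S})=\{(\Gamma,\gamma):\Gamma\subseteq\mathcal{S}\text{ finite},\Gamma\vdash\gamma\}$; $\mathcal{AF}_{\vdash}(\mathcal{S})$ is the attack graph on it where $(\Gamma,\gamma)$ attacks $(\Gamma',\gamma')$ iff $\gamma\in\overline{\phi}$ for some $\phi\in\widehat{\Gamma'}$.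 Complete extension = conflict-free set defending each member (every attacker of a member is attacked by a member) and containing every argument it defends; preferred = $\subseteq$-maximal complete. Pre-Relevance of the setting: (a) for all $\mathcal{S}_1,\mathcal{S}_2,\phi$ with $\mathcal{S}_1\cup\{\phi\}\mid\mathcal{S}_2$, $\mathcal{S}_1\cup\mathcal{S}_2\vdash\phi$ implies $\mathcal{S}_1'\vdash\phi$ for some $\mathcal{S}_1'\subseteq\mathcal{S}_1$; (b) primeness: for all sets of atoms $\mathcal{A}_1\mid\mathcal{A}_2$, all finite $\mathcal{S}_1,\mathcal{T}_1,\mathcal{S}_2,\mathcal{T}_2$ with $\mathsf{Atoms}(\mathcal{S}_i),\mathsf{Atoms}(\mathcal{T}_i)\subseteq\mathcal{A}_i$, and all $\phi,\psi$ with $\psi\in\overline{\phi}$, $\phi\in\widehat{\mathcal{T}_1\cup\mathcal{T}_2}$: if $\mathcal{S}_1\cup\mathcal{S}_2\vdash\psi$ then there are $i\in\{1,2\}$, $\mathcal{S}_i'\subseteq\mathcal{S}_i$, $\phi_i\in\widehat{\mathcal{T}_i}$, $\psi_i\in\overline{\phi_i}$ with $\mathcal{S}_i'\vdash\psi_i$; (c) $\widehat{\Delta}\subseteq\widehat{\Delta\cup\Delta'}$ for all finite $\Delta,\Delta'$. *)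

theory Defs
  imports Main
begin

definition Atoms :: "('f \<Rightarrow> 'a set) \<Rightarrow> 'f set \<Rightarrow> 'a set" where
  "Atoms atoms S = (\<Union>x\<in>S. atoms x)"

definition indep :: "('f \<Rightarrow> 'a set) \<Rightarrow> 'f set \<Rightarrow> 'f set \<Rightarrow> bool" where
  "indep atoms S1 S2 \<longleftrightarrow> Atoms atoms S1 \<inter> Atoms atoms S2 = {}"

definition setting ::
  "('f set \<Rightarrow> 'f \<Rightarrow> bool) \<Rightarrow> ('f \<Rightarrow> 'f set) \<Rightarrow> ('f set \<Rightarrow> 'f set) \<Rightarrow> bool" where
  "setting entails contr hat \<longleftrightarrow>
     (\<forall>\<Gamma> \<gamma>. entails \<Gamma> \<gamma> \<longrightarrow> finite \<Gamma>) \<and>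
     (\<forall>\<Delta>. finite \<Delta> \<longrightarrow> finite (hat \<Delta>)) \<and>
     hat {} = {}"

definition Arg :: "('f set \<Rightarrow> 'f \<Rightarrow> bool) \<Rightarrow> 'f set \<Rightarrow> ('f set \<times> 'f) set" where
  "Arg entails S = {(\<Gamma>, \<gamma>). \<Gamma> \<subseteq> S \<and> finite \<Gamma> \<and> entails \<Gamma> \<gamma>}"

definition attacks ::
  "('f \<Rightarrow> 'f set) \<Rightarrow> ('f set \<Rightarrow> 'f set) \<Rightarrow> ('f set \<times> 'f) \<Rightarrow> ('f set \<times> 'f) \<Rightarrow> bool" where
  "attacks contr hat a b \<longleftrightarrow> (\<exists>\<phi>\<in>hat (fst b). snd a \<in> contr \<phi>)"

definition conflict_free :: "'x set \<Rightarrow> ('x \<Rightarrow> 'x \<Rightarrow> bool) \<Rightarrow> 'x set \<Rightarrow> bool" where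
  "conflict_free Args Att E \<longleftrightarrow> E \<subseteq> Args \<and> (\<forall>a\<in>E. \<forall>b\<in>E. \<not> Att a b)"

definition defends :: "'x set \<Rightarrow> ('x \<Rightarrow> 'x \<Rightarrow> bool) \<Rightarrow> 'x set \<Rightarrow> 'x \<Rightarrow> bool" where
  "defends Args Att E a \<longleftrightarrow>
     (\<forall>b\<in>Args. Att b a \<longrightarrow> (\<exists>c\<in>E. Att c b))"

definition complete_ext :: "'x set \<Rightarrow> ('x \<Rightarrow> 'x \<Rightarrow> bool) \<Rightarrow> 'x set \<Rightarrow> bool" where
  "complete_ext Args Att E \<longleftrightarrow>
     conflict_free Args Att E \<and>
     (\<forall>a\<in>E. defends Args Att E a) \<and>
     (\<forall>a\<in>Args. defends Args Att E a \<longrightarrow> a \<in> E)"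

definition preferred_ext :: "'x set \<Rightarrow> ('x \<Rightarrow> 'x \<Rightarrow> bool) \<Rightarrow> 'x set \<Rightarrow> bool" where
  "preferred_ext Args Att E \<longleftrightarrow>
     complete_ext Args Att E \<and>
     (\<forall>E'. complete_ext Args Att E' \<and> E \<subseteq> E' \<longrightarrow> E' = E)"

definition pre_relevance ::
  "('f \<Rightarrow> 'a set) \<Rightarrow> ('f set \<Rightarrow> 'f \<Rightarrow> bool) \<Rightarrow> ('f \<Rightarrow> 'f set) \<Rightarrow> ('f set \<Rightarrow> 'f set) \<Rightarrow> bool" where
  "pre_relevance atoms entails contr hat \<longleftrightarrow>
     (\<forall>S1 S2 \<phi>. indep atoms (S1 \<union> {\<phi>}) S2 \<longrightarrow> entails (S1 \<union> S2) \<phi> \<longrightarrow>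
        (\<exists>S1'\<subseteq>S1. entails S1' \<phi>)) \<and>
     (\<forall>A1 A2 S1 T1 S2 T2 \<phi> \<psi>.
        A1 \<inter> A2 = {} \<longrightarrow>
        finite S1 \<longrightarrow> finite T1 \<longrightarrow> finite S2 \<longrightarrow> finite T2 \<longrightarrow>
        Atoms atoms S1 \<subseteq> A1 \<longrightarrow> Atoms atoms T1 \<subseteq> A1 \<longrightarrow>
        Atoms atoms S2 \<subseteq> A2 \<longrightarrow> Atoms atoms T2 \<subseteq> A2 \<longrightarrow>
        \<psi> \<in> contr \<phi> \<longrightarrow> \<phi> \<in> hat (T1 \<union> T2) \<longrightarrow> entails (S1 \<union> S2) \<psi> \<longrightarrow>
        ((\<exists>S1'\<subseteq>S1. \<exists>\<phi>1\<in>hat T1. \<exists>\<psi>1\<in>contr \<phi>1. entails S1' \<psi>1) \<or>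
         (\<exists>S2'\<subseteq>S2. \<exists>\<phi>2\<in>hat T2. \<exists>\<psi>2\<in>contr \<phi>2. entails S2' \<psi>2))) \<and>
     (\<forall>\<Delta> \<Delta>'. finite \<Delta> \<longrightarrow> finite \<Delta>' \<longrightarrow> hat \<Delta> \<subseteq> hat (\<Delta> \<union> \<Delta>'))"

end

theory Submission
  imports Defs
begin

definition adm :: "'x set \<Rightarrow> ('x \<Rightarrow> 'x \<Rightarrow> bool) \<Rightarrow> 'x set \<Rightarrow> bool" where
  "adm Args Att A \<longleftrightarrow> conflict_free Args Att A \<and> (\<forall>a\<in>A. defends Args Att A a)"

lemma defends_mono: "defends Args Att A a \<Longrightarrow> A \<subseteq> B \<Longrightarrow> defends Args Att B a"
  unfolding defends_def by blast

lemma adm_extend: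
  assumes "adm Args Att M" "a \<in> Args" "defends Args Att M a"
  shows "adm Args Att (insert a M)"
proof -
  have cf: "M \<subseteq> Args" "\<forall>x\<in>M. \<forall>y\<in>M. \<not> Att x y" and dM: "\<forall>x\<in>M. defends Args Att M x"
    using assms(1) unfolding adm_def conflict_free_def by auto
  have dfa: "\<And>b. b \<in> Args \<Longrightarrow> Att b a \<Longrightarrow> \<exists>c\<in>M. Att c b"
    using assms(3) unfolding defends_def by blast
  have "\<not> Att a m" if mm: "m \<in> insert a M" for m
  proof
    assume h: "Att a m"
    have "defends Args Att M m" using mm dM assms(3) by blast
    then have "\<exists>c\<in>M. Att c a" using h assms(2) unfolding defends_def by blast
    then obtain c where c: "c \<in> M" "Att c a" by blast
    have "c \<in> Args" using c(1) cf(1) by (rule subsetD[rotated])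
    then obtain d where "d \<in> M" "Att d c" using dfa c(2) by blast
    then show False using cf(2) c(1) by blast
  qed
  moreover have "\<not> Att m a" if mM: "m \<in> M" for m
  proof
    assume h: "Att m a"
    have "m \<in> Args" using mM cf(1) by (rule subsetD[rotated])
    then obtain c where "c \<in> M" "Att c m" using assms(3) h unfolding defends_def by blast
    then show False using cf mM by blast
  qed
  ultimately have "\<forall>x\<in>insert a M. \<forall>y\<in>insert a M. \<not> Att x y"
    using cf(2) by blast
  moreover have "insert a M \<subseteq> Args" using cf(1) assms(2) by blast
  moreover have "\<forall>x\<in>insert a M. defends Args Att (insert a M) x"
  proof
    fix x assume "x \<in> insert a M"
    then have "defends Args Att M x" using dM assms(3) by blast
    then show "defends Args Att (insert a M) x" by (rule defends_mono) blast
  qed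
  ultimately show ?thesis unfolding adm_def conflict_free_def by blast
qed

lemma adm_complete:
  assumes "adm Args Att A"
  shows "\<exists>M. complete_ext Args Att M \<and> A \<subseteq> M"
proof -
  let ?C = "{X. adm Args Att X \<and> A \<subseteq> X}"
  have "\<exists>M\<in>?C. \<forall>X\<in>?C. M \<subseteq> X \<longrightarrow> X = M"
  proof (rule subset_Zorn_nonempty)
    show "?C \<noteq> {}" using assms by blast
  next
    fix Ch assume ne: "Ch \<noteq> {}" and ch: "subset.chain ?C Ch"
    have sub: "Ch \<subseteq> ?C" and tot: "\<forall>X\<in>Ch. \<forall>Y\<in>Ch. X \<subseteq> Y \<or> Y \<subseteq> X"
      using ch unfolding subset_chain_def by blast+
    have "conflict_free Args Att (\<Union>Ch)"
      unfolding conflict_free_def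
    proof safe
      fix x X assume "x \<in> X" "X \<in> Ch" then show "x \<in> Args"
        using sub unfolding adm_def conflict_free_def by blast
    next
      fix x y X Y assume "x \<in> X" "X \<in> Ch" "y \<in> Y" "Y \<in> Ch" "Att x y"
      have cfa: "\<forall>Z\<in>Ch. \<forall>u\<in>Z. \<forall>v\<in>Z. \<not> Att u v"
        using sub unfolding adm_def conflict_free_def by blast
      have "X \<subseteq> Y \<or> Y \<subseteq> X" using tot[rule_format, OF \<open>X \<in> Ch\<close> \<open>Y \<in> Ch\<close>] by blast
      then obtain Z where "Z \<in> Ch" "x \<in> Z" "y \<in> Z"
        using \<open>x \<in> X\<close> \<open>y \<in> Y\<close> \<open>X \<in> Ch\<close> \<open>Y \<in> Ch\<close> by blast
      then show False using cfa \<open>Att x y\<close> by blast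
    qed
    moreover have "\<forall>a\<in>\<Union>Ch. defends Args Att (\<Union>Ch) a"
    proof
      fix a assume "a \<in> \<Union>Ch"
      then obtain X where "X \<in> Ch" "a \<in> X" by blast
      then show "defends Args Att (\<Union>Ch) a" using sub defends_mono[of Args Att X a "\<Union>Ch"]
        unfolding adm_def by blast
    qed
    moreover have "A \<subseteq> \<Union>Ch" using ne sub by blast
    ultimately show "\<Union>Ch \<in> ?C" unfolding adm_def by blast
  qed
  then obtain M where M: "adm Args Att M" "A \<subseteq> M" and mx: "\<forall>X\<in>?C. M \<subseteq> X \<longrightarrow> X = M" by blast
  have "a \<in> M" if "a \<in> Args" "defends Args Att M a" for a
  proof -
    have "insert a M \<in> ?C" using adm_extend[OF M(1) that] M(2) by blast
    then show ?thesis using mx by blast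
  qed
  then show ?thesis using M unfolding complete_ext_def adm_def by blast
qed

lemma Atoms_mono: "A \<subseteq> B \<Longrightarrow> Atoms atoms A \<subseteq> Atoms atoms B"
  unfolding Atoms_def by blast

theorem lemma8:
  fixes atoms :: "'f \<Rightarrow> 'a set"
    and entails :: "'f set \<Rightarrow> 'f \<Rightarrow> bool"
    and contr :: "'f \<Rightarrow> 'f set"
    and hat :: "'f set \<Rightarrow> 'f set"
    and S S' :: "'f set"
    and E :: "('f set \<times> 'f) set"
  assumes "setting entails contr hat"
    and "pre_relevance atoms entails contr hat"
    and "indep atoms S S'"
    and "preferred_ext (Arg entails (S \<union> S')) (attacks contr hat) E"
  shows "preferred_ext (Arg entails S) (attacks contr hat) (E \<inter> Arg entails S)"
proof -
  let ?Att = "attacks contr hat"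
  let ?A = "Arg entails (S \<union> S')"
  let ?A1 = "Arg entails S"
  have hat0: "hat {} = {}" using assms(1) unfolding setting_def by blast
  have prime: "\<And>A1 A2 S1 T1 S2 T2 \<phi> \<psi>.
        A1 \<inter> A2 = {} \<Longrightarrow>
        finite S1 \<Longrightarrow> finite T1 \<Longrightarrow> finite S2 \<Longrightarrow> finite T2 \<Longrightarrow>
        Atoms atoms S1 \<subseteq> A1 \<Longrightarrow> Atoms atoms T1 \<subseteq> A1 \<Longrightarrow>
        Atoms atoms S2 \<subseteq> A2 \<Longrightarrow> Atoms atoms T2 \<subseteq> A2 \<Longrightarrow>
        \<psi> \<in> contr \<phi> \<Longrightarrow> \<phi> \<in> hat (T1 \<union> T2) \<Longrightarrow> entails (S1 \<union> S2) \<psi> \<Longrightarrow>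
        ((\<exists>S1'\<subseteq>S1. \<exists>\<phi>1\<in>hat T1. \<exists>\<psi>1\<in>contr \<phi>1. entails S1' \<psi>1) \<or>
         (\<exists>S2'\<subseteq>S2. \<exists>\<phi>2\<in>hat T2. \<exists>\<psi>2\<in>contr \<phi>2. entails S2' \<psi>2))"
    using assms(2) unfolding pre_relevance_def by blast
  have hatmono: "\<And>D D'. finite D' \<Longrightarrow> D \<subseteq> D' \<Longrightarrow> hat D \<subseteq> hat D'"
  proof -
    fix D D' :: "'f set" assume "finite D'" "D \<subseteq> D'"
    then have "finite D" "D' = D \<union> D'" using finite_subset by blast+
    then show "hat D \<subseteq> hat D'" using assms(2) \<open>finite D'\<close> unfolding pre_relevance_def by metis
  qed
  have disj: "Atoms atoms S \<inter> Atoms atoms S' = {}" using assms(3) unfolding indep_def .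
  have ArgS: "?A1 \<subseteq> ?A" unfolding Arg_def by auto
  have reduce: "\<exists>b'. b' \<in> ?A1 \<and> fst b' \<subseteq> fst b \<and> ?Att b' a"
    if b: "b \<in> ?A" and a: "a \<in> ?A1" and att: "?Att b a" for a b
  proof -
    obtain Gb gb where bb: "b = (Gb, gb)" by (cases b)
    obtain Ga ga where aa: "a = (Ga, ga)" by (cases a)
    have Gb: "Gb \<subseteq> S \<union> S'" "finite Gb" "entails Gb gb" using b bb unfolding Arg_def by auto
    have Ga: "Ga \<subseteq> S" "finite Ga" using a aa unfolding Arg_def by auto
    obtain \<phi> where ph: "\<phi> \<in> hat Ga" "gb \<in> contr \<phi>" using att aa bb unfolding attacks_def by auto
    have eq: "(Gb \<inter> S) \<union> (Gb \<inter> S') = Gb" using Gb by blast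
    have "(\<exists>S1'\<subseteq>Gb \<inter> S. \<exists>\<phi>1\<in>hat Ga. \<exists>\<psi>1\<in>contr \<phi>1. entails S1' \<psi>1) \<or>
         (\<exists>S2'\<subseteq>Gb \<inter> S'. \<exists>\<phi>2\<in>hat {}. \<exists>\<psi>2\<in>contr \<phi>2. entails S2' \<psi>2)"
      apply (rule prime[OF disj])
      using Gb Ga ph eq Atoms_mono[of _ S atoms] Atoms_mono[of _ S' atoms]
      by (auto simp: Atoms_def)
    then obtain S1' \<phi>1 \<psi>1 where "S1' \<subseteq> Gb \<inter> S" "\<phi>1 \<in> hat Ga" "\<psi>1 \<in> contr \<phi>1" "entails S1' \<psi>1"
      using hat0 by blast
    then show ?thesis using Gb finite_subset[of S1' Gb]
      by (intro exI[of _ "(S1', \<psi>1)"]) (auto simp: Arg_def attacks_def aa bb)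
  qed
  have pref: "complete_ext ?A ?Att E" and maxE: "\<And>E'. complete_ext ?A ?Att E' \<Longrightarrow> E \<subseteq> E' \<Longrightarrow> E' = E"
    using assms(4) unfolding preferred_ext_def by blast+
  have Esub: "E \<subseteq> ?A" and cfE: "\<forall>x\<in>E. \<forall>y\<in>E. \<not> ?Att x y"
    and defE: "\<forall>x\<in>E. defends ?A ?Att E x" and clE: "\<forall>x\<in>?A. defends ?A ?Att E x \<longrightarrow> x \<in> E"
    using pref unfolding complete_ext_def conflict_free_def by blast+
  have attsub: "?Att c b" if "?Att c b'" "fst b' \<subseteq> fst b" "finite (fst b)" for c b b'
    using that hatmono unfolding attacks_def by blast
  have subE: "b' \<in> E" if "b \<in> E" "b' \<in> ?A1" "fst b' \<subseteq> fst b" for b b'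
  proof -
    have fb: "finite (fst b)" "fst b \<subseteq> S \<union> S'" 
    proof -
      have "b \<in> ?A" using that(1) Esub by (rule subsetD[rotated])
      then show "finite (fst b)" "fst b \<subseteq> S \<union> S'" by (cases b, simp add: Arg_def)+
    qed
    have "b' \<in> ?A" using that(2) ArgS by blast
    moreover have "defends ?A ?Att E b'"
      using defE that(1) attsub[OF _ that(3) fb(1)] unfolding defends_def by blast
    ultimately show ?thesis using clE by blast
  qed
  let ?E1 = "E \<inter> ?A1"
  have E1c: "complete_ext ?A1 ?Att ?E1"
    unfolding complete_ext_def
  proof (intro conjI ballI impI)
    show "conflict_free ?A1 ?Att ?E1" using cfE unfolding conflict_free_def by blast
  next
    fix a assume a: "a \<in> ?E1"
    show "defends ?A1 ?Att ?E1 a"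
      unfolding defends_def
    proof (intro ballI impI)
      fix b assume b: "b \<in> ?A1" "?Att b a"
      then obtain c where c: "c \<in> E" "?Att c b" using defE a ArgS unfolding defends_def by blast
      obtain c' where c': "c' \<in> ?A1" "fst c' \<subseteq> fst c" "?Att c' b"
        using reduce[of c b] c b Esub by blast
      then show "\<exists>c\<in>?E1. ?Att c b" using subE[OF c(1) c'(1,2)] by blast
    qed
  next
    fix a assume a: "a \<in> ?A1" and d: "defends ?A1 ?Att ?E1 a"
    have "defends ?A ?Att E a"
      unfolding defends_def
    proof (intro ballI impI)
      fix b assume b: "b \<in> ?A" "?Att b a"
      obtain b' where b': "b' \<in> ?A1" "fst b' \<subseteq> fst b" "?Att b' a" using reduce[OF b(1) a b(2)] by blast
      then obtain c where "c \<in> ?E1" "?Att c b'" using d unfolding defends_def by blast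
      moreover have "finite (fst b)" using b(1) unfolding Arg_def by auto
      ultimately show "\<exists>c\<in>E. ?Att c b" using attsub b' by blast
    qed
    then show "a \<in> ?E1" using clE a ArgS by blast
  qed
  have "E1' = ?E1" if c1: "complete_ext ?A1 ?Att E1'" and sup: "?E1 \<subseteq> E1'" for E1'
  proof -
    have E1sub: "E1' \<subseteq> ?A1" and cf1: "\<forall>x\<in>E1'. \<forall>y\<in>E1'. \<not> ?Att x y"
      and def1: "\<forall>x\<in>E1'. defends ?A1 ?Att E1' x"
      using c1 unfolding complete_ext_def conflict_free_def by blast+
    have "adm ?A ?Att (E \<union> E1')"
      unfolding adm_def conflict_free_def
    proof (intro conjI ballI)
      show "E \<union> E1' \<subseteq> ?A" using Esub E1sub ArgS by blast
    next
      fix x y assume x: "x \<in> E \<union> E1'" and y: "y \<in> E \<union> E1'"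
      show "\<not> ?Att x y"
      proof
        assume xy: "?Att x y"
        consider "x \<in> E" "y \<in> E" | "x \<in> E1'" "y \<in> E1'" | "x \<in> E1'" "y \<in> E" | "x \<in> E" "y \<in> E1'"
          using x y by blast
        then show False
        proof cases
          case 1 then show ?thesis using cfE xy by blast
        next
          case 2 then show ?thesis using cf1 xy by blast
        next
          case 3
          then obtain c where c: "c \<in> E" "?Att c x" using defE xy E1sub ArgS unfolding defends_def by blast
          obtain c' where c': "c' \<in> ?A1" "fst c' \<subseteq> fst c" "?Att c' x"
            using reduce[of c x] c 3 E1sub Esub by blast
          have "c' \<in> E1'" using subE[OF c(1) c'(1,2)] c'(1) sup by blast
          then show ?thesis using cf1 3 c'(3) by blast
        next
          case 4
          obtain x' where x': "x' \<in> ?A1" "fst x' \<subseteq> fst x" "?Att x' y"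
            using reduce[of x y] 4 xy E1sub Esub by blast
          have "x' \<in> E1'" using subE[OF 4(1) x'(1,2)] x'(1) sup by blast
          then show ?thesis using cf1 4 x'(3) by blast
        qed
      qed
    next
      fix a assume a: "a \<in> E \<union> E1'"
      show "defends ?A ?Att (E \<union> E1') a"
      proof (cases "a \<in> E")
        case True
        then have "defends ?A ?Att E a" using defE by blast
        then show ?thesis by (rule defends_mono) blast
      next
        case False
        then have aE1: "a \<in> E1'" using a by blast
        show ?thesis
          unfolding defends_def
        proof (intro ballI impI)
          fix b assume b: "b \<in> ?A" "?Att b a"
          obtain b' where b': "b' \<in> ?A1" "fst b' \<subseteq> fst b" "?Att b' a"
            using reduce[OF b(1) _ b(2)] aE1 E1sub by blast
          then obtain c where "c \<in> E1'" "?Att c b'" using def1 aE1 unfolding defends_def by blast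
          moreover have "finite (fst b)" using b(1) unfolding Arg_def by auto
          ultimately show "\<exists>c\<in>E \<union> E1'. ?Att c b" using attsub b' by blast
        qed
      qed
    qed
    then obtain M where M: "complete_ext ?A ?Att M" "E \<union> E1' \<subseteq> M" using adm_complete[of ?A ?Att "E \<union> E1'"] by blast
    then have "M = E" using maxE by blast
    then show ?thesis using M sup E1sub by blast
  qed
  then show ?thesis using E1c unfolding preferred_ext_def by blast
qed

end
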